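(* Let $d\ge1$ and let $P$ be a probability distribution on $\{0,1\}^d$ with $P(\nu)>0$ for all $\nu\in\{0,1\}^d$. Fix $\omega\in\{0,1\}^d$. Let $A_\omega$ be the $(2^d-1)\times d$ binary matrix with rows indexed by $\nu\in\{0,1\}^d\setminus\{\omega\}$ and entries $A_\omega(\nu,i):=1$ if $\nu_i\ne\omega_i$ and $0$ otherwise, and let $b_\omega$ be the vector indexed by $\nu\in\{0,1\}^d\setminus\{\omega\}$ with $b_\omega(\nu):=\ln(P(\nu)/P(\omega))$. Then, under the bijection $q\mapsto y$, $y_i=(1-2\omega_i)\ln\left(\frac{q_i}{1-q_i}\right)$, from $(0,1)^d$ onto $\mathbb{R}^d$, the set $\mathcal{Q}_\omega\cap(0,1)^d$ corresponds exactly to the set of $y\in\mathbb{R}^d$ satisfying the coordinatewise inequalities $A_\omega y\le b_\omega$.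
   Context: For $\omega\in\{0,1\}^d$ and $q\in[0,1]^d$, $f_\omega(q):=\prod_{i=1}^d q_i^{-\omega_i}(1-q_i)^{\omega_i-1}\in\mathbb{R}\cup\{+\infty\}$ (with $0^0=1$, $1/0=+\infty$), and $\mathcal{Q}_\omega:=\{q\in[0,1]^d\mid \forall\nu\in\{0,1\}^d:\ P(\omega)f_\omega(q)\le P(\nu)f_\nu(q)\}$. *)

theory Defs
  imports "HOL-Analysis.Analysis"
begin

text \<open>The index set {1..d} is rendered as a finite type 'd (so d = CARD('d) \<ge> 1).
  Points of {0,1}^d and of [0,1]^d, R^d are functions 'd \<Rightarrow> real.\<close>

definition cube :: "('d::finite \<Rightarrow> real) set" where
  "cube = {w. \<forall>i. w i \<in> {0,1}}"

definition unit_box :: "('d::finite \<Rightarrow> real) set" where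
  "unit_box = {q. \<forall>i. 0 \<le> q i \<and> q i \<le> 1}"

definition open_unit_box :: "('d::finite \<Rightarrow> real) set" where
  "open_unit_box = {q. \<forall>i. 0 < q i \<and> q i < 1}"

text \<open>One factor q_i^{-w_i} (1-q_i)^{w_i-1}, with 0^0 = 1 and 1/0 = +\<infinity>.\<close>
definition f_factor :: "real \<Rightarrow> real \<Rightarrow> ereal" where
  "f_factor wi qi =
     (if wi = 1 then (if qi = 0 then \<infinity> else ereal (1 / qi))
      else (if qi = 1 then \<infinity> else ereal (1 / (1 - qi))))"

definition f_omega :: "('d::finite \<Rightarrow> real) \<Rightarrow> ('d \<Rightarrow> real) \<Rightarrow> ereal" where
  "f_omega w q = (\<Prod>i\<in>UNIV. f_factor (w i) (q i))"

definition Q_omega :: "(('d::finite \<Rightarrow> real) \<Rightarrow> real) \<Rightarrow> ('d \<Rightarrow> real) \<Rightarrow> ('d \<Rightarrow> real) set" where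
  "Q_omega P w = {q \<in> unit_box. \<forall>\<nu>\<in>cube.
      ereal (P w) * f_omega w q \<le> ereal (P \<nu>) * f_omega \<nu> q}"

definition A_omega :: "('d::finite \<Rightarrow> real) \<Rightarrow> ('d \<Rightarrow> real) \<Rightarrow> 'd \<Rightarrow> real" where
  "A_omega w \<nu> i = (if \<nu> i \<noteq> w i then 1 else 0)"

definition b_omega :: "(('d::finite \<Rightarrow> real) \<Rightarrow> real) \<Rightarrow> ('d \<Rightarrow> real) \<Rightarrow> ('d \<Rightarrow> real) \<Rightarrow> real" where
  "b_omega P w \<nu> = ln (P \<nu> / P w)"

definition logit_map :: "('d::finite \<Rightarrow> real) \<Rightarrow> ('d \<Rightarrow> real) \<Rightarrow> ('d \<Rightarrow> real)" where
  "logit_map w q = (\<lambda>i. (1 - 2 * w i) * ln (q i / (1 - q i)))"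

end

theory Submission
  imports Defs
begin

definition hf :: "real \<Rightarrow> real \<Rightarrow> real" where
  "hf wi qi = (if wi = 1 then 1 / qi else 1 / (1 - qi))"

lemma f_omega_box:
  assumes "q \<in> open_unit_box"
  shows "f_omega v q = ereal (\<Prod>i\<in>UNIV. hf (v i) (q i))"
proof -
  have "f_factor (v i) (q i) = ereal (hf (v i) (q i))" for i
  proof -
    have "0 < q i" "q i < 1" using assms by (auto simp: open_unit_box_def)
    then show ?thesis by (simp add: f_factor_def hf_def)
  qed
  then show ?thesis unfolding f_omega_def by (simp add: prod_ereal)
qed

lemma sq_w: assumes "wi \<in> {0,1::real}" shows "(1 - 2*wi) * (1 - 2*wi) = 1"
  using assms by auto

lemma hf_ratio:
  assumes "wi \<in> {0,1}" "vi \<in> {0,1}" "0 < qi" "qi < 1"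
  shows "hf vi qi = hf wi qi * exp (- ((if vi \<noteq> wi then 1 else 0) * ((1 - 2*wi) * ln (qi / (1 - qi)))))"
proof -
  have e: "exp (ln (qi / (1 - qi))) = qi / (1 - qi)" using assms by simp
  have e2: "exp (- ln (qi / (1 - qi))) = (1 - qi) / qi" using assms
    by (simp add: exp_minus)
  show ?thesis using assms e e2 by (auto simp: hf_def field_simps)
qed

lemma hf_pos: "0 < qi \<Longrightarrow> qi < 1 \<Longrightarrow> hf wi qi > 0"
  by (auto simp: hf_def)

lemma key:
  assumes q: "q \<in> open_unit_box" and w: "w \<in> cube" and v: "v \<in> cube"
    and Pw: "P w > 0" and Pv: "P v > 0"
  shows "(ereal (P w) * f_omega w q \<le> ereal (P v) * f_omega v q) \<longleftrightarrow>
         (\<Sum>i\<in>UNIV. A_omega w v i * logit_map w q i) \<le> b_omega P w v"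
proof -
  define S where "S = (\<Sum>i\<in>UNIV. A_omega w v i * logit_map w q i)"
  define Fw where "Fw = (\<Prod>i\<in>UNIV. hf (w i) (q i))"
  have Fwpos: "Fw > 0" unfolding Fw_def using q
    by (intro prod_pos) (auto simp: open_unit_box_def hf_pos)
  have "(\<Prod>i\<in>UNIV. hf (v i) (q i)) = (\<Prod>i\<in>UNIV. hf (w i) (q i) * exp (- (A_omega w v i * logit_map w q i)))"
  proof (rule prod.cong[OF refl])
    fix i
    have "w i \<in> {0,1}" "v i \<in> {0,1}" "0 < q i" "q i < 1"
      using q w v by (auto simp: open_unit_box_def cube_def)
    from hf_ratio[OF this] show "hf (v i) (q i) = hf (w i) (q i) * exp (- (A_omega w v i * logit_map w q i))"
      by (simp add: A_omega_def logit_map_def)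
  qed
  also have "\<dots> = Fw * exp (- S)"
    by (simp add: Fw_def S_def prod.distrib exp_sum[symmetric] sum_negf)
  finally have Fv: "(\<Prod>i\<in>UNIV. hf (v i) (q i)) = Fw * exp (- S)" .
  have "(ereal (P w) * f_omega w q \<le> ereal (P v) * f_omega v q) \<longleftrightarrow> P w * Fw \<le> P v * (Fw * exp (-S))"
    using q by (simp add: f_omega_box Fv Fw_def)
  also have "\<dots> \<longleftrightarrow> P w \<le> P v * exp (-S)"
    using Fwpos by (simp add: mult.commute mult.left_commute)
  also have "\<dots> \<longleftrightarrow> ln (P w) \<le> ln (P v * exp (-S))"
    using Pw Pv by (simp)
  also have "\<dots> \<longleftrightarrow> S \<le> ln (P v / P w)"
    using Pw Pv by (simp add: ln_mult ln_div, linarith)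
  finally show ?thesis by (simp add: S_def b_omega_def)
qed

lemma lg1: "(0::real) < e \<Longrightarrow> 0 < e/(1+e) \<and> e/(1+e) < 1"
  by (simp add: divide_less_eq)

lemma lg2: assumes "(0::real) < e" shows "(e/(1+e)) / (1 - e/(1+e)) = e"
proof -
  have "1 - e/(1+e) = 1/(1+e)" using assms by (simp add: field_simps)
  then show ?thesis using assms by simp
qed

lemma lg3: assumes "(0::real) < a" "a < 1" "0 < b" "b < 1" "a/(1-a) = b/(1-b)" shows "a = b"
proof -
  have "a*(1-b) = b*(1-a)" using assms by (simp add: divide_eq_eq eq_divide_eq)
  then show ?thesis by (simp add: algebra_simps)
qed

lemma bij:
  assumes w: "w \<in> cube"
  shows "bij_betw (logit_map w) open_unit_box UNIV"
  unfolding bij_betw_def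
proof
  show "inj_on (logit_map w) open_unit_box"
  proof (rule inj_onI)
    fix q q' assume q: "q \<in> open_unit_box" and q': "q' \<in> open_unit_box"
      and eq: "logit_map w q = logit_map w q'"
    show "q = q'"
    proof
      fix i
      have "w i = 0 \<or> w i = 1" using w by (auto simp: cube_def)
      then have wi: "1 - 2 * w i \<noteq> 0" by auto
      have "ln (q i / (1 - q i)) = ln (q' i / (1 - q' i))"
        using fun_cong[OF eq, of i] wi by (simp add: logit_map_def)
      moreover have "q i / (1 - q i) > 0" "q' i / (1 - q' i) > 0"
        using q q' by (auto simp: open_unit_box_def)
      ultimately have "q i / (1 - q i) = q' i / (1 - q' i)" by simp
      then show "q i = q' i" using q q' lg3[of "q i" "q' i"] by (auto simp: open_unit_box_def)
    qed
  qed
next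
  show "logit_map w ` open_unit_box = UNIV"
  proof (rule set_eqI, rule iffI)
    fix y :: "'a \<Rightarrow> real" assume "y \<in> UNIV"
    define q where "q = (\<lambda>i. exp ((1 - 2 * w i) * y i) / (1 + exp ((1 - 2 * w i) * y i)))"
    have qb: "q \<in> open_unit_box" unfolding q_def open_unit_box_def
      using lg1 exp_gt_zero by blast
    have "logit_map w q = y"
    proof
      fix i
      define z where "z = (1 - 2 * w i) * y i"
      have "q i / (1 - q i) = exp z"
        unfolding q_def z_def using lg2 by simp
      then have "logit_map w q i = (1 - 2 * w i) * z" by (simp add: logit_map_def)
      also have "\<dots> = y i" using sq_w[of "w i"] w
        by (simp add: z_def cube_def mult.assoc[symmetric])
      finally show "logit_map w q i = y i" .
    qed
    then show "y \<in> logit_map w ` open_unit_box" using qb by blast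
  qed simp
qed

theorem corollary2:
  fixes P :: "('d::finite \<Rightarrow> real) \<Rightarrow> real" and w :: "'d \<Rightarrow> real"
  assumes Ppos: "\<forall>\<nu>\<in>cube. P \<nu> > 0"
    and Psum: "(\<Sum>\<nu>\<in>cube. P \<nu>) = 1"
    and w: "w \<in> cube"
  shows "bij_betw (logit_map w) open_unit_box UNIV \<and>
         logit_map w ` (Q_omega P w \<inter> open_unit_box) =
           {y. \<forall>\<nu>\<in>cube - {w}. (\<Sum>i\<in>UNIV. A_omega w \<nu> i * y i) \<le> b_omega P w \<nu>}"
proof -
  have B: "bij_betw (logit_map w) open_unit_box UNIV" using bij[OF w] .
  have memQ: "q \<in> Q_omega P w \<longleftrightarrow> logit_map w q \<in> {y. \<forall>\<nu>\<in>cube - {w}. (\<Sum>i\<in>UNIV. A_omega w \<nu> i * y i) \<le> b_omega P w \<nu>}"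
    if q: "q \<in> open_unit_box" for q
  proof -
    have ub: "q \<in> unit_box" using q by (auto simp: open_unit_box_def unit_box_def less_imp_le)
    have "q \<in> Q_omega P w \<longleftrightarrow> (\<forall>\<nu>\<in>cube. ereal (P w) * f_omega w q \<le> ereal (P \<nu>) * f_omega \<nu> q)"
      using ub by (simp add: Q_omega_def)
    also have "\<dots> \<longleftrightarrow> (\<forall>\<nu>\<in>cube - {w}. ereal (P w) * f_omega w q \<le> ereal (P \<nu>) * f_omega \<nu> q)"
      by auto
    also have "\<dots> \<longleftrightarrow> (\<forall>\<nu>\<in>cube - {w}. (\<Sum>i\<in>UNIV. A_omega w \<nu> i * logit_map w q i) \<le> b_omega P w \<nu>)"
      using key[OF q w] Ppos w by auto
    finally show ?thesis by simp
  qed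
  have "logit_map w ` (Q_omega P w \<inter> open_unit_box) =
           {y. \<forall>\<nu>\<in>cube - {w}. (\<Sum>i\<in>UNIV. A_omega w \<nu> i * y i) \<le> b_omega P w \<nu>}"
  proof (rule set_eqI, rule iffI)
    fix y assume "y \<in> logit_map w ` (Q_omega P w \<inter> open_unit_box)"
    then obtain q where q: "q \<in> Q_omega P w" "q \<in> open_unit_box" "y = logit_map w q" by blast
    show "y \<in> {y. \<forall>\<nu>\<in>cube - {w}. (\<Sum>i\<in>UNIV. A_omega w \<nu> i * y i) \<le> b_omega P w \<nu>}"
      using memQ[OF q(2)] q(1) unfolding q(3) by simp
  next
    fix y assume y: "y \<in> {y. \<forall>\<nu>\<in>cube - {w}. (\<Sum>i\<in>UNIV. A_omega w \<nu> i * y i) \<le> b_omega P w \<nu>}"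
    have "y \<in> logit_map w ` open_unit_box" using B by (simp add: bij_betw_def)
    then obtain q where q: "q \<in> open_unit_box" "logit_map w q = y"
      by (metis imageE)
    have "q \<in> Q_omega P w" using memQ[OF q(1)] y q(2) by simp
    then show "y \<in> logit_map w ` (Q_omega P w \<inter> open_unit_box)"
      using q by (intro image_eqI[of y _ q]) auto
  qed
  with B show ?thesis by (rule conjI)
qed

end
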